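(* Let $M=\{1,\dots,m\}$ with $m\ge2$ and let $t_1,\dots,t_m$ be nonzero variables; write $t_I=\sum_{i\in I}t_i$. Then $$\sum_{\substack{I\sqcup J=M\\ I,J\neq\emptyset}} t_I^{|I|-2}t_J^{|J|-2}=t_M^{m-4}\left(2t_M\left(\frac1{t_1}+\dots+\frac1{t_m}\right)-(m-2)(m-3)\right),$$ where the sum runs over ordered pairs $(I,J)$ of disjoint nonempty subsets with union $M$. Equivalently, for any partition $\kappa=(k_1,\dots,k_m)$ of $n$, $$\frac12\sum_{(\lambda,\mu)}\frac{|\lambda|^{l(\lambda)-2}}{|\mathrm{Aut}(\lambda)|}\frac{|\mu|^{l(\mu)-2}}{|\mathrm{Aut}(\mu)|}|\mathrm{Aut}(\kappa)|=n^{m-4}\left(n\sum_{i=1}^m\frac1{k_i}-\frac12(m-2)(m-3)\right),$$ the sum over ordered pairs of nonempty partitions with $\lambda\oplus\mu=\kappa$.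
   Context: For a partition $\tau$, $|\tau|$ is the sum of parts, $l(\tau)$ the number of parts, $|\mathrm{Aut}(\tau)|$ the product of factorials of multiplicities of distinct parts; $\lambda\oplus\mu$ is the partition whose multiset of parts is the union of those of $\lambda$ and $\mu$. *)

theory Defs
  imports Complex_Main "HOL-Library.Multiset"
begin

text \<open>Partitions are represented as multisets of positive naturals (their parts).
  |tau| = sum_mset tau, l(tau) = size tau, and |Aut(tau)| is the product over the
  distinct parts of the factorial of their multiplicities.
  The direct sum lambda (+) mu is multiset union (+).\<close>

definition is_partition :: "nat multiset \<Rightarrow> bool" where
  "is_partition \<tau> \<longleftrightarrow> (\<forall>k\<in>#\<tau>. 0 < k)"

definition aut :: "nat multiset \<Rightarrow> nat" where
  "aut \<tau> = (\<Prod>x\<in>set_mset \<tau>. fact (count \<tau> x))"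

end

theory Submission
  imports Defs
begin


definition zs :: "('b \<Rightarrow> 'a::field_char_0) \<Rightarrow> 'b set \<Rightarrow> 'a" where
  "zs t I = (\<Sum>i\<in>I. t i)"

lemma sum_Pow_insert:
  assumes "finite T" "a \<notin> T"
  shows "(\<Sum>I\<in>Pow (insert a T). g I) = (\<Sum>I\<in>Pow T. g I) + (\<Sum>I\<in>Pow T. g (insert a I))"
proof -
  have "Pow T \<inter> insert a ` Pow T = {}" using assms by auto
  moreover have "inj_on (insert a) (Pow T)" using assms
    unfolding inj_on_def by (metis PowD insert_ident subsetD)
  ultimately show ?thesis using assms
    by (simp add: Pow_insert sum.union_disjoint sum.reindex)
qed

lemma FD:
  fixes t :: "'b \<Rightarrow> 'a::field_char_0"
  assumes "finite T"
  shows "d < card T \<Longrightarrow> (\<Sum>I\<in>Pow T. (-1)^(card (T-I)) * (c + zs t I)^d) = 0"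
  using assms
proof (induction T arbitrary: c d rule: finite_induct)
  case empty thus ?case by simp
next
  case (insert a T)
  have e1: "\<And>I. I \<in> Pow T \<Longrightarrow> card (insert a T - I) = Suc (card (T - I))"
  proof -
    fix I assume "I \<in> Pow T"
    hence "insert a T - I = insert a (T - I)" using insert by auto
    thus "card (insert a T - I) = Suc (card (T - I))" using insert by simp
  qed
  have e2: "\<And>I. I \<in> Pow T \<Longrightarrow> card (insert a T - insert a I) = card (T - I)"
    using insert by (metis Diff_insert2 Diff_insert_absorb)
  have e3: "\<And>I. I \<in> Pow T \<Longrightarrow> zs t (insert a I) = t a + zs t I"
    using insert by (auto simp: zs_def intro!: sum.insert dest: finite_subset)
  have "(\<Sum>I\<in>Pow (insert a T). (-1)^(card (insert a T-I)) * (c + zs t I)^d)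
     = (\<Sum>I\<in>Pow T. (-1)^(card (T-I)) * ((c + zs t I + t a)^d - (c + zs t I)^d))"
    using insert by (simp add: sum_Pow_insert e1 e2 e3 sum.distrib[symmetric] algebra_simps)
  also have "\<dots> = (\<Sum>I\<in>Pow T. (-1)^(card (T-I)) * (\<Sum>j<d. of_nat (d choose j) * (c + zs t I)^j * t a^(d-j)))"
  proof (rule sum.cong[OF refl])
    fix I
    have "(c + zs t I + t a)^d = (\<Sum>j\<le>d. of_nat (d choose j) * (c + zs t I)^j * t a^(d-j))"
      by (rule binomial_ring)
    also have "\<dots> = (\<Sum>j<d. of_nat (d choose j) * (c + zs t I)^j * t a^(d-j)) + (c + zs t I)^d"
      by (simp add: lessThan_Suc_atMost[symmetric])
    finally show "(-1)^(card (T-I)) * ((c + zs t I + t a)^d - (c + zs t I)^d) =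
      (-1)^(card (T-I)) * (\<Sum>j<d. of_nat (d choose j) * (c + zs t I)^j * t a^(d-j))" by simp
  qed
  also have "\<dots> = (\<Sum>j<d. of_nat (d choose j) * t a^(d-j) * (\<Sum>I\<in>Pow T. (-1)^(card (T-I)) * (c + zs t I)^j))"
    by (simp add: sum_distrib_left sum_distrib_right sum.swap[of _ "Pow T"] algebra_simps)
  also have "\<dots> = 0"
  proof (rule sum.neutral, rule ballI)
    fix j assume "j \<in> {..<d}"
    hence "j < card T" using insert by simp
    thus "of_nat (d choose j) * t a^(d-j) * (\<Sum>I\<in>Pow T. (-1)^(card (T-I)) * (c + zs t I)^j) = 0"
      using insert.IH by simp
  qed
  finally show ?case .
qed



definition r :: "('b \<Rightarrow> 'a::field_char_0) \<Rightarrow> 'a \<Rightarrow> 'b set \<Rightarrow> 'a" where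
  "r t x I = (if I = {} then 1 else x * (x + zs t I)^(card I - 1))"

lemma DC:
  fixes G :: "'b set \<Rightarrow> nat \<Rightarrow> 'a::field_char_0"
  assumes "finite S"
  shows "(\<Sum>I\<in>Pow S. of_nat (card (S-I) choose i) * G I (card (S-I) - i))
       = (\<Sum>K\<in>{K. K \<subseteq> S \<and> card K = i}. \<Sum>I\<in>Pow (S-K). G I (card (S-K-I)))"
proof -
  let ?Ks = "{K. K \<subseteq> S \<and> card K = i}"
  have fK: "finite ?Ks" using assms by auto
  have "(\<Sum>K\<in>?Ks. \<Sum>I\<in>Pow (S-K). G I (card (S-K-I)))
      = (\<Sum>K\<in>?Ks. \<Sum>I\<in>Pow S. if K \<subseteq> S - I then G I (card (S-I) - i) else 0)"
  proof (rule sum.cong[OF refl])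
    fix K assume K: "K \<in> ?Ks"
    have "(\<Sum>I\<in>Pow S. if K \<subseteq> S - I then G I (card (S-I) - i) else 0)
        = (\<Sum>I\<in>{I\<in>Pow S. K \<subseteq> S - I}. G I (card (S-I) - i))"
      by (rule sym, rule sum.inter_filter) (simp add: assms)
    also have "{I\<in>Pow S. K \<subseteq> S - I} = Pow (S-K)" using K by auto
    also have "(\<Sum>I\<in>Pow (S-K). G I (card (S-I) - i)) = (\<Sum>I\<in>Pow (S-K). G I (card (S-K-I)))"
    proof (rule sum.cong[OF refl])
      fix I assume I: "I \<in> Pow (S-K)"
      have "S - I = K \<union> (S - K - I)" using I K by auto
      moreover have "K \<inter> (S - K - I) = {}" by auto
      ultimately have "card (S - I) = card K + card (S-K-I)"
        using assms K by (metis card_Un_disjoint finite_Diff finite_subset mem_Collect_eq)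
      thus "G I (card (S-I) - i) = G I (card (S-K-I))" using K by simp
    qed
    finally show "(\<Sum>I\<in>Pow (S-K). G I (card (S-K-I))) =
      (\<Sum>I\<in>Pow S. if K \<subseteq> S - I then G I (card (S-I) - i) else 0)" by simp
  qed
  also have "\<dots> = (\<Sum>I\<in>Pow S. \<Sum>K\<in>?Ks. if K \<subseteq> S - I then G I (card (S-I) - i) else 0)"
    by (rule sum.swap)
  also have "\<dots> = (\<Sum>I\<in>Pow S. of_nat (card (S-I) choose i) * G I (card (S-I) - i))"
  proof (rule sum.cong[OF refl])
    fix I assume I: "I \<in> Pow S"
    have "(\<Sum>K\<in>?Ks. if K \<subseteq> S - I then G I (card (S-I) - i) else 0)
        = (\<Sum>K\<in>{K\<in>?Ks. K \<subseteq> S - I}. G I (card (S-I) - i))"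
      by (rule sym, rule sum.inter_filter) (simp add: fK)
    also have "{K\<in>?Ks. K \<subseteq> S - I} = {K. K \<subseteq> S - I \<and> card K = i}" by auto
    also have "card {K. K \<subseteq> S - I \<and> card K = i} = card (S - I) choose i"
      using assms by (simp add: n_subsets)
    ultimately show "(\<Sum>K\<in>?Ks. if K \<subseteq> S - I then G I (card (S-I) - i) else 0) =
         of_nat (card (S-I) choose i) * G I (card (S-I) - i)" by simp
  qed
  finally show ?thesis by simp
qed

lemma zs_empty[simp]: "zs t {} = 0" by (simp add: zs_def)

lemma Zlem:
  fixes t :: "'b \<Rightarrow> 'a::field_char_0"
  assumes "finite T"
  shows "(\<Sum>I\<in>Pow T. r t x I * (-(x + zs t I))^(card (T-I))) = (if T = {} then 1 else 0)"
proof (cases "T = {}")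
  case True thus ?thesis by (simp add: r_def)
next
  case False
  hence cT: "card T \<ge> 1" using assms by (simp add: Suc_leI card_gt_0_iff)
  have "(\<Sum>I\<in>Pow T. r t x I * (-(x + zs t I))^(card (T-I)))
      = (\<Sum>I\<in>Pow T. x * ((-1)^(card (T-I)) * (x + zs t I)^(card T - 1)))"
  proof (rule sum.cong[OF refl])
    fix I assume I: "I \<in> Pow T"
    have fI: "finite I" using I assms finite_subset by auto
    have cI: "card I \<le> card T" using I assms card_mono by auto
    have cd: "card (T - I) = card T - card I" using I assms by (simp add: card_Diff_subset fI)
    show "r t x I * (-(x + zs t I))^(card (T-I)) = x * ((-1)^(card (T-I)) * (x + zs t I)^(card T - 1))"
    proof (cases "I = {}")
      case True
      obtain k where k: "card T = Suc k" using cT by (metis Suc_diff_1 less_le_trans zero_less_one)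
      then show ?thesis using True by (simp add: r_def power_minus[of x] mult_ac)
    next
      case False
      hence "card I \<ge> 1" using fI by (simp add: Suc_leI card_gt_0_iff)
      hence e: "card I - 1 + (card T - card I) = card T - 1" using cI by simp
      have "r t x I * (-(x + zs t I))^(card (T-I)) = x * ((-1)^(card (T-I)) * ((x + zs t I)^(card I - 1) * (x + zs t I)^(card T - card I)))"
        using False unfolding power_minus[of "x + zs t I"] by (simp add: r_def cd mult_ac)
      also have "\<dots> = x * ((-1)^(card (T-I)) * (x + zs t I)^(card T - 1))"
        by (simp only: power_add[symmetric] e)
      finally show ?thesis .
    qed
  qed
  also have "\<dots> = x * (\<Sum>I\<in>Pow T. (-1)^(card (T-I)) * (x + zs t I)^(card T - 1))"
    by (simp add: sum_distrib_left)
  also have "\<dots> = 0" using FD[OF assms, of "card T - 1" x] cT by simp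
  finally show ?thesis using False by simp
qed



lemma zs_split: "finite S \<Longrightarrow> I \<subseteq> S \<Longrightarrow> zs t S = zs t I + zs t (S - I)"
  unfolding zs_def by (metis add.commute sum.subset_diff)

lemma HF:
  fixes t :: "'b \<Rightarrow> 'a::field_char_0"
  assumes S: "finite S"
  shows "(\<Sum>I\<in>Pow S. r t x I * (y + zs t (S-I))^(card (S-I))) = (x + y + zs t S)^(card S)"
proof -
  define W where "W = x + y + zs t S"
  define n where "n = card S"
  define G where "G = (\<lambda>I k. r t x I * (-(x + zs t I))^k)"
  have step: "r t x I * (y + zs t (S-I))^(card (S-I)) =
     (\<Sum>i\<le>n. W^i * (of_nat (card (S-I) choose i) * G I (card (S-I) - i)))" if I: "I \<in> Pow S" for I
  proof -
    have "y + zs t (S-I) = W + (-(x + zs t I))" using zs_split[OF S, of I t] I by (simp add: W_def)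
    hence "(y + zs t (S-I))^(card (S-I)) = (\<Sum>i\<le>card (S-I). of_nat (card (S-I) choose i) * W^i * (-(x + zs t I))^(card (S-I) - i))"
      by (simp add: binomial_ring)
    also have "\<dots> = (\<Sum>i\<le>n. of_nat (card (S-I) choose i) * W^i * (-(x + zs t I))^(card (S-I) - i))"
    proof (rule sum.mono_neutral_left)
      show "{..card (S-I)} \<subseteq> {..n}" using S by (auto simp: n_def card_mono)
    qed (auto)
    finally show ?thesis by (simp add: G_def sum_distrib_left mult_ac)
  qed
  have "(\<Sum>I\<in>Pow S. r t x I * (y + zs t (S-I))^(card (S-I)))
      = (\<Sum>I\<in>Pow S. \<Sum>i\<le>n. W^i * (of_nat (card (S-I) choose i) * G I (card (S-I) - i)))"
    using step by (rule sum.cong[OF refl])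
  also have "\<dots> = (\<Sum>i\<le>n. W^i * (\<Sum>I\<in>Pow S. of_nat (card (S-I) choose i) * G I (card (S-I) - i)))"
    by (simp add: sum.swap[of _ "Pow S"] sum_distrib_left)
  also have "\<dots> = (\<Sum>i\<le>n. W^i * (\<Sum>K\<in>{K. K \<subseteq> S \<and> card K = i}. \<Sum>I\<in>Pow (S-K). G I (card (S-K-I))))"
    by (simp add: DC[OF S])
  also have "\<dots> = (\<Sum>i\<le>n. W^i * (if i = n then 1 else 0))"
  proof (rule sum.cong[OF refl])
    fix i assume "i \<in> {..n}"
    have "(\<Sum>K\<in>{K. K \<subseteq> S \<and> card K = i}. \<Sum>I\<in>Pow (S-K). G I (card (S-K-I)))
        = (\<Sum>K\<in>{K. K \<subseteq> S \<and> card K = i}. if S - K = {} then 1 else 0)"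
      unfolding G_def by (intro sum.cong[OF refl] Zlem) (use S in auto)
    also have "\<dots> = (if i = n then 1 else 0)"
    proof (cases "i = n")
      case True
      have "{K. K \<subseteq> S \<and> card K = i} = {S}" using S True n_def
        by (auto dest: card_subset_eq)
      thus ?thesis using True by simp
    next
      case False
      have "\<And>K. K \<subseteq> S \<Longrightarrow> card K = i \<Longrightarrow> S - K \<noteq> {}" using False n_def by auto
      thus ?thesis using False by (intro trans[OF sum.neutral]) auto
    qed
    finally show "W^i * (\<Sum>K\<in>{K. K \<subseteq> S \<and> card K = i}. \<Sum>I\<in>Pow (S-K). G I (card (S-K-I)))
        = W^i * (if i = n then 1 else 0)" by simp
  qed
  also have "\<dots> = (\<Sum>i\<le>n. if i = n then W^i else 0)" by (rule sum.cong) auto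
  also have "\<dots> = W^n" by (subst sum.delta) auto
  finally show ?thesis by (simp add: W_def n_def)
qed



definition conv :: "('b set \<Rightarrow> 'a::field_char_0) \<Rightarrow> ('b set \<Rightarrow> 'a) \<Rightarrow> 'b set \<Rightarrow> 'a" where
  "conv f g S = (\<Sum>I\<in>Pow S. f I * g (S - I))"

lemma conv_assoc:
  assumes S: "finite S"
  shows "conv f (conv g h) S = conv (conv f g) h S"
proof -
  have "conv f (conv g h) S = (\<Sum>I\<in>Pow S. \<Sum>A\<in>Pow (S-I). f I * g A * h (S - I - A))"
    by (simp add: conv_def sum_distrib_left mult_ac)
  also have "\<dots> = (\<Sum>p\<in>Sigma (Pow S) (\<lambda>I. Pow (S-I)). f (fst p) * g (snd p) * h (S - fst p - snd p))"
    using S by (subst sum.Sigma) (auto simp: split_def)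
  also have "\<dots> = (\<Sum>p\<in>Sigma (Pow S) Pow. f (snd p) * g (fst p - snd p) * h (S - fst p))"
  proof (rule sum.reindex_bij_witness[where i="\<lambda>p. (snd p, fst p - snd p)" and j="\<lambda>p. (fst p \<union> snd p, fst p)"])
    fix a assume "a \<in> Sigma (Pow S) (\<lambda>I. Pow (S-I))"
    thus "(snd (fst a \<union> snd a, fst a), fst (fst a \<union> snd a, fst a) - snd (fst a \<union> snd a, fst a)) = a"
      by (cases a) auto
  next
    fix a assume "a \<in> Sigma (Pow S) (\<lambda>I. Pow (S-I))"
    thus "(fst a \<union> snd a, fst a) \<in> Sigma (Pow S) Pow" by (cases a) auto
  next
    fix b assume "b \<in> Sigma (Pow S) Pow"
    thus "(fst (snd b, fst b - snd b) \<union> snd (snd b, fst b - snd b), fst (snd b, fst b - snd b)) = b"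
      by (cases b) auto
  next
    fix b assume "b \<in> Sigma (Pow S) Pow"
    thus "(snd b, fst b - snd b) \<in> Sigma (Pow S) (\<lambda>I. Pow (S-I))" by (cases b) auto
  next
    fix a assume "a \<in> Sigma (Pow S) (\<lambda>I. Pow (S-I))"
    thus "f (snd (fst a \<union> snd a, fst a)) * g (fst (fst a \<union> snd a, fst a) - snd (fst a \<union> snd a, fst a)) *
          h (S - fst (fst a \<union> snd a, fst a)) = f (fst a) * g (snd a) * h (S - fst a - snd a)"
    proof -
      obtain I A where a: "a = (I, A)" by (cases a)
      have "(I \<union> A) - I = A" "S - (I \<union> A) = S - I - A" using \<open>a \<in> _\<close> a by auto
      thus ?thesis using a by simp
    qed
  qed
  also have "\<dots> = (\<Sum>L\<in>Pow S. \<Sum>I\<in>Pow L. f I * g (L - I) * h (S - L))"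
    using S by (subst sum.Sigma) (auto simp: split_def intro: finite_subset)
  also have "\<dots> = conv (conv f g) h S"
    by (simp add: conv_def sum_distrib_right)
  finally show ?thesis .
qed

lemma conv_cancel:
  assumes "finite S" "q {} = 1" "\<And>S'. S' \<subseteq> S \<Longrightarrow> conv f q S' = conv g q S'"
  shows "f S = g S"
  using assms
proof (induction "card S" arbitrary: S rule: less_induct)
  case less
  have split: "conv h q S = h S + (\<Sum>I\<in>Pow S - {S}. h I * q (S - I))" for h
    unfolding conv_def using less.prems by (subst sum.remove[of _ S]) auto
  have "(\<Sum>I\<in>Pow S - {S}. f I * q (S - I)) = (\<Sum>I\<in>Pow S - {S}. g I * q (S - I))"
  proof (rule sum.cong[OF refl])
    fix I assume I: "I \<in> Pow S - {S}"
    hence "I \<subset> S" by auto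
    hence "card I < card S" using less.prems by (simp add: psubset_card_mono)
    moreover have "finite I" using I less.prems finite_subset by auto
    ultimately have "f I = g I" using less.hyps[of I] less.prems \<open>I \<subset> S\<close> by auto
    thus "f I * q (S - I) = g I * q (S - I)" by simp
  qed
  thus ?case using less.prems(3)[of S] split[of f] split[of g] by simp
qed

lemma conv_cong: "(\<And>J. J \<subseteq> S \<Longrightarrow> g J = g' J) \<Longrightarrow> conv f g S = conv f g' S"
  unfolding conv_def by (intro sum.cong) auto

lemma AB:
  fixes t :: "'b \<Rightarrow> 'a::field_char_0"
  assumes S: "finite S"
  shows "(\<Sum>I\<in>Pow S. r t x I * r t y (S - I)) = r t (x + y) S"
proof -
  define q where "q = (\<lambda>B. zs t B ^ card B)"
  have 1: "conv (r t y) q J = (y + zs t J)^card J" if "finite J" for J y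
    using HF[OF that, of t y 0] by (simp add: conv_def q_def)
  have "conv (conv (r t x) (r t y)) q S' = conv (r t (x+y)) q S'" if "S' \<subseteq> S" for S'
  proof -
    have fS': "finite S'" using that S finite_subset by auto
    have "conv (conv (r t x) (r t y)) q S' = conv (r t x) (conv (r t y) q) S'"
      by (rule conv_assoc[OF fS', symmetric])
    also have "\<dots> = conv (r t x) (\<lambda>J. (y + zs t J)^card J) S'"
      by (rule conv_cong, rule 1) (use fS' in \<open>auto intro: finite_subset\<close>)
    also have "\<dots> = (x + y + zs t S')^card S'" using HF[OF fS', of t x y] by (simp add: conv_def)
    also have "\<dots> = conv (r t (x+y)) q S'" using 1[OF fS', of "x+y"] by simp
    finally show ?thesis .
  qed
  note H = this
  have q0: "q {} = 1" by (simp add: q_def)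
  have "conv (r t x) (r t y) S = r t (x+y) S"
    by (rule conv_cancel[OF S q0 H])
  thus ?thesis by (simp add: conv_def)
qed



definition f :: "('b \<Rightarrow> 'a::field_char_0) \<Rightarrow> 'b set \<Rightarrow> 'a" where
  "f t I = zs t I powi (int (card I) - 2)"

definition offd :: "'b set \<Rightarrow> ('b \<times> 'b) set" where
  "offd J = Sigma J (\<lambda>a. J - {a})"

lemma zs_remove: "finite I \<Longrightarrow> e \<in> I \<Longrightarrow> zs t I = t e + zs t (I - {e})"
  unfolding zs_def by (simp add: sum.remove)

lemma root:
  assumes "finite I" "e \<in> I" "t e \<noteq> 0"
  shows "t e * f t I = r t (t e) (I - {e})"
proof (cases "I = {e}")
  case True thus ?thesis using assms by (simp add: f_def r_def zs_def power_int_minus)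
next
  case False
  then obtain b where b: "b \<in> I" "b \<noteq> e" using assms by blast
  have "card {e, b} \<le> card I" using b assms by (intro card_mono) auto
  hence "card I \<ge> 2" using b by simp
  hence e: "int (card I) - 2 = int (card I - 2)" by simp
  have ne: "I - {e} \<noteq> {}" using False assms by auto
  have c: "card (I - {e}) - 1 = card I - 2" using assms by simp
  show ?thesis using ne unfolding f_def r_def e power_int_of_nat c zs_remove[OF assms(1,2)] by simp
qed

lemma card_offd: "finite J \<Longrightarrow> card (offd J) = card J * (card J - 1)"
  unfolding offd_def by (simp add: card_SigmaI)

lemma sum_offd:
  assumes J: "finite J"
  shows "(\<Sum>p\<in>offd J. c + t (fst p) + t (snd p)) =
     of_nat (card J * (card J - 1)) * c + 2 * of_nat (card J - 1) * zs t J"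
proof -
  have "(\<Sum>p\<in>offd J. c + t (fst p) + t (snd p)) = (\<Sum>a\<in>J. \<Sum>b\<in>J - {a}. c + t a + t b)"
    unfolding offd_def using J by (subst sum.Sigma) (auto simp: split_def)
  also have "\<dots> = (\<Sum>a\<in>J. of_nat (card J - 1) * (c + t a) + (zs t J - t a))"
    using J by (intro sum.cong refl) (simp add: sum.distrib zs_def sum_diff1 algebra_simps)
  also have "\<dots> = of_nat (card J) * (of_nat (card J - 1) * c) + of_nat (card J - 1) * zs t J + (of_nat (card J) * zs t J - zs t J)"
    by (simp add: sum.distrib sum_subtractf sum_distrib_left sum_distrib_right zs_def algebra_simps)
  also have "\<dots> = of_nat (card J * (card J - 1)) * c + 2 * of_nat (card J - 1) * zs t J"
  proof (cases "card J")
    case 0 thus ?thesis using J by (simp add: zs_def)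
  next
    case (Suc k) thus ?thesis by (simp add: algebra_simps)
  qed
  finally show ?thesis .
qed

definition phi :: "('b \<Rightarrow> 'a::field_char_0) \<Rightarrow> 'b set \<Rightarrow> 'a" where
  "phi t J = (\<Sum>b\<in>J. r t (t b) (J - {b}) / t b) -
      (1/2) * (\<Sum>p\<in>offd J. r t (t (fst p) + t (snd p)) (J - {fst p, snd p}))"

lemma unroot:
  assumes J: "finite J" "J \<noteq> {}" and nz: "\<And>b. b \<in> J \<Longrightarrow> t b \<noteq> 0"
  shows "f t J = phi t J"
proof -
  have 1: "(\<Sum>b\<in>J. r t (t b) (J - {b}) / t b) = of_nat (card J) * f t J"
  proof -
    have "(\<Sum>b\<in>J. r t (t b) (J - {b}) / t b) = (\<Sum>b\<in>J. f t J)"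
      using nz by (intro sum.cong refl) (simp add: root[OF J(1), symmetric])
    thus ?thesis by simp
  qed
  define k where "k = card J"
  have k1: "k \<ge> 1" using J by (simp add: k_def Suc_leI card_gt_0_iff)
  have 2: "(\<Sum>p\<in>offd J. r t (t (fst p) + t (snd p)) (J - {fst p, snd p})) = 2 * of_nat (k - 1) * f t J"
  proof (cases "k \<ge> 3")
    case True
    have "(\<Sum>p\<in>offd J. r t (t (fst p) + t (snd p)) (J - {fst p, snd p}))
       = (\<Sum>p\<in>offd J. (0 + t (fst p) + t (snd p)) * zs t J ^ (k - 3))"
    proof (intro sum.cong refl)
      fix p assume p: "p \<in> offd J"
      obtain a b where ab: "p = (a, b)" "a \<in> J" "b \<in> J" "a \<noteq> b" using p by (auto simp: offd_def)
      have cJ: "card (J - {a, b}) = k - 2" using ab J by (simp add: k_def card_Diff_subset)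
      have ne: "J - {a,b} \<noteq> {}"
      proof
        assume "J - {a,b} = {}"
        hence "card (J - {a,b}) = 0" by (simp only: card.empty)
        thus False using cJ True by simp
      qed
      have "zs t J = t a + t b + zs t (J - {a,b})"
        using zs_remove[OF J(1) ab(2), where t=t] zs_remove[of "J - {a}" b t] ab J
        by (simp add: Diff_insert2[symmetric] insert_commute add.assoc)
      thus "r t (t (fst p) + t (snd p)) (J - {fst p, snd p}) = (0 + t (fst p) + t (snd p)) * zs t J ^ (k - 3)"
        using ab ne cJ by (simp add: r_def numeral_3_eq_3)
    qed
    also have "\<dots> = (of_nat (k * (k - 1)) * 0 + 2 * of_nat (k - 1) * zs t J) * zs t J ^ (k - 3)"
      by (simp only: sum_distrib_right[symmetric] sum_offd[OF J(1)] k_def)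
    also have "\<dots> = 2 * of_nat (k - 1) * zs t J ^ (k - 2)"
    proof -
      have "k - 2 = Suc (k - 3)" using True by simp
      thus ?thesis by simp
    qed
    also have "\<dots> = 2 * of_nat (k - 1) * f t J"
      using True by (simp add: f_def k_def power_int_def nat_diff_distrib)
    finally show ?thesis .
  next
    case False
    hence "k = 1 \<or> k = 2" using k1 by auto
    thus ?thesis
    proof
      assume "k = 1"
      then obtain a where "J = {a}" unfolding k_def by (metis card_1_singletonE)
      hence "offd J = {}" by (auto simp: offd_def)
      thus ?thesis using \<open>k = 1\<close> by simp
    next
      assume k2: "k = 2"
      have "(\<Sum>p\<in>offd J. r t (t (fst p) + t (snd p)) (J - {fst p, snd p})) = (\<Sum>p\<in>offd J. 1)"
      proof (intro sum.cong refl)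
        fix p assume p: "p \<in> offd J"
        obtain a b where ab: "p = (a, b)" "a \<in> J" "b \<in> J" "a \<noteq> b" using p by (auto simp: offd_def)
        have "card (J - {a, b}) = 0" using ab J k2 by (simp add: k_def card_Diff_subset)
        hence "J - {a,b} = {}" using J by simp
        thus "r t (t (fst p) + t (snd p)) (J - {fst p, snd p}) = 1" using ab by (simp add: r_def)
      qed
      also have "\<dots> = 2" using k2 J by (simp add: card_offd k_def)
      finally show ?thesis using k2 by (simp add: f_def k_def)
    qed
  qed
  obtain k' where k': "card J = Suc k'" using k1 k_def by (metis Suc_diff_1 less_le_trans zero_less_one)
  show ?thesis unfolding phi_def 1 2 k_def k' by (simp add: algebra_simps)
qed



lemma step_d1:
  assumes M: "finite M" and e: "e \<in> M"
  shows "(\<Sum>I\<in>Pow M - {{}, M}. f t I * f t (M - I)) = 2 * (\<Sum>I\<in>{I\<in>Pow M. e \<in> I \<and> I \<noteq> M}. f t I * f t (M - I))"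
proof -
  define A where "A = {I\<in>Pow M. e \<in> I \<and> I \<noteq> M}"
  define B where "B = (\<lambda>I. M - I) ` A"
  have AB: "Pow M - {{}, M} = A \<union> B"
  proof (rule set_eqI, rule iffI)
    fix I assume I: "I \<in> Pow M - {{}, M}"
    show "I \<in> A \<union> B"
    proof (cases "e \<in> I")
      case True thus ?thesis using I by (auto simp: A_def)
    next
      case False
      have "M - I \<in> A" using I False e by (auto simp: A_def)
      moreover have "I = M - (M - I)" using I by auto
      ultimately show ?thesis unfolding B_def by blast
    qed
  next
    fix I assume "I \<in> A \<union> B"
    thus "I \<in> Pow M - {{}, M}" using e by (auto simp: A_def B_def)
  qed
  have disj: "A \<inter> B = {}" by (auto simp: A_def B_def)
  have inj: "inj_on (\<lambda>I. M - I) A" unfolding inj_on_def A_def by blast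
  have fA: "finite A" "finite B" using M by (auto simp: A_def B_def)
  have "(\<Sum>I\<in>B. f t I * f t (M - I)) = (\<Sum>I\<in>A. f t (M - I) * f t (M - (M - I)))"
    unfolding B_def by (simp add: sum.reindex[OF inj])
  also have "\<dots> = (\<Sum>I\<in>A. f t I * f t (M - I))"
    by (intro sum.cong refl) (auto simp: A_def double_diff mult.commute)
  finally have "(\<Sum>I\<in>B. f t I * f t (M - I)) = (\<Sum>I\<in>A. f t I * f t (M - I))" .
  thus ?thesis unfolding AB using disj fA by (simp add: sum.union_disjoint A_def)
qed

lemma step_d2:
  assumes M: "finite M" and e: "e \<in> M" and nz: "t e \<noteq> 0"
  shows "t e * (\<Sum>I\<in>{I\<in>Pow M. e \<in> I \<and> I \<noteq> M}. f t I * f t (M - I))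
       = (\<Sum>I\<in>Pow (M - {e}) - {M - {e}}. r t (t e) I * f t ((M - {e}) - I))"
proof -
  let ?S = "M - {e}"
  have eq: "{I\<in>Pow M. e \<in> I \<and> I \<noteq> M} = insert e ` (Pow ?S - {?S})"
  proof (rule set_eqI, rule iffI)
    fix I assume I: "I \<in> {I\<in>Pow M. e \<in> I \<and> I \<noteq> M}"
    hence "I = insert e (I - {e})" "I - {e} \<in> Pow ?S - {?S}" using e by auto
    thus "I \<in> insert e ` (Pow ?S - {?S})" by blast
  next
    fix I assume "I \<in> insert e ` (Pow ?S - {?S})"
    then obtain J where J: "I = insert e J" "J \<subseteq> ?S" "J \<noteq> ?S" by auto
    hence "I \<noteq> M" using e by auto
    thus "I \<in> {I\<in>Pow M. e \<in> I \<and> I \<noteq> M}" using J e by auto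
  qed
  have inj: "inj_on (insert e) (Pow ?S - {?S})" unfolding inj_on_def by blast
  have "t e * (\<Sum>I\<in>{I\<in>Pow M. e \<in> I \<and> I \<noteq> M}. f t I * f t (M - I))
      = (\<Sum>J\<in>Pow ?S - {?S}. t e * f t (insert e J) * f t (M - insert e J))"
    unfolding eq by (simp add: sum.reindex[OF inj] sum_distrib_left mult.assoc)
  also have "\<dots> = (\<Sum>J\<in>Pow ?S - {?S}. r t (t e) J * f t (?S - J))"
  proof (intro sum.cong refl)
    fix J assume J: "J \<in> Pow ?S - {?S}"
    have fJ: "finite (insert e J)" using J M finite_subset by auto
    have "t e * f t (insert e J) = r t (t e) (insert e J - {e})" using root[of "insert e J" e t] fJ nz by simp
    moreover have "insert e J - {e} = J" using J by auto
    moreover have "M - insert e J = ?S - J" by auto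
    ultimately show "t e * f t (insert e J) * f t (M - insert e J) = r t (t e) J * f t (?S - J)" by simp
  qed
  finally show ?thesis .
qed

lemma phi_empty[simp]: "phi t {} = 0"
  by (simp add: phi_def offd_def)

lemma step_d3:
  assumes S: "finite S" and nz: "\<And>b. b \<in> S \<Longrightarrow> t b \<noteq> 0"
  shows "(\<Sum>I\<in>Pow S - {S}. r t x I * f t (S - I)) = (\<Sum>I\<in>Pow S. r t x I * phi t (S - I))"
proof -
  have "(\<Sum>I\<in>Pow S. r t x I * phi t (S - I)) = r t x S * phi t (S - S) + (\<Sum>I\<in>Pow S - {S}. r t x I * phi t (S - I))"
    using S by (subst sum.remove[of _ S]) auto
  also have "\<dots> = (\<Sum>I\<in>Pow S - {S}. r t x I * f t (S - I))"
    using S nz by (auto intro!: sum.cong unroot[symmetric])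
  finally show ?thesis ..
qed

lemma step_d4:
  fixes t :: "'b \<Rightarrow> 'a::field_char_0"
  assumes S: "finite S"
  shows "(\<Sum>I\<in>Pow S. r t x I * phi t (S - I)) =
    (\<Sum>b\<in>S. r t (x + t b) (S - {b}) / t b) -
    (1/2) * (\<Sum>p\<in>offd S. r t (x + (t (fst p) + t (snd p))) (S - {fst p, snd p}))"
proof -
  have fP: "finite (Pow S)" using S by simp
  have fO: "finite (offd S)" using S by (simp add: offd_def)
  have 1: "(\<Sum>I\<in>Pow S. r t x I * (\<Sum>b\<in>S - I. r t (t b) (S - I - {b}) / t b))
      = (\<Sum>b\<in>S. r t (x + t b) (S - {b}) / t b)"
  proof -
    have "(\<Sum>I\<in>Pow S. r t x I * (\<Sum>b\<in>S - I. r t (t b) (S - I - {b}) / t b))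
        = (\<Sum>I\<in>Pow S. \<Sum>b\<in>{b\<in>S. b \<notin> I}. r t x I * r t (t b) ((S - {b}) - I) / t b)"
      by (intro sum.cong refl) (auto simp: sum_distrib_left set_diff_eq Diff_insert2 Diff_insert intro!: sum.cong arg_cong[where f="r t _"])
    also have "\<dots> = (\<Sum>b\<in>S. \<Sum>I\<in>{I\<in>Pow S. b \<notin> I}. r t x I * r t (t b) ((S - {b}) - I) / t b)"
      using sum.swap_restrict[OF fP S] by simp
    also have "\<dots> = (\<Sum>b\<in>S. (\<Sum>I\<in>Pow (S - {b}). r t x I * r t (t b) ((S - {b}) - I)) / t b)"
    proof (intro sum.cong refl)
      fix b assume "b \<in> S"
      have "{I\<in>Pow S. b \<notin> I} = Pow (S - {b})" by auto
      thus "(\<Sum>I\<in>{I\<in>Pow S. b \<notin> I}. r t x I * r t (t b) ((S - {b}) - I) / t b) =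
          (\<Sum>I\<in>Pow (S - {b}). r t x I * r t (t b) ((S - {b}) - I)) / t b"
        by (simp add: sum_divide_distrib)
    qed
    also have "\<dots> = (\<Sum>b\<in>S. r t (x + t b) (S - {b}) / t b)"
      using S by (simp add: AB)
    finally show ?thesis .
  qed
  have 2: "(\<Sum>I\<in>Pow S. r t x I * (\<Sum>p\<in>offd (S - I). r t (t (fst p) + t (snd p)) (S - I - {fst p, snd p})))
      = (\<Sum>p\<in>offd S. r t (x + (t (fst p) + t (snd p))) (S - {fst p, snd p}))"
  proof -
    have o: "offd (S - I) = {p\<in>offd S. fst p \<notin> I \<and> snd p \<notin> I}" for I
      by (auto simp: offd_def)
    have "(\<Sum>I\<in>Pow S. r t x I * (\<Sum>p\<in>offd (S - I). r t (t (fst p) + t (snd p)) (S - I - {fst p, snd p})))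
        = (\<Sum>I\<in>Pow S. \<Sum>p\<in>{p\<in>offd S. fst p \<notin> I \<and> snd p \<notin> I}. r t x I * r t (t (fst p) + t (snd p)) ((S - {fst p, snd p}) - I))"
      unfolding o by (intro sum.cong refl) (auto simp: sum_distrib_left intro!: sum.cong arg_cong[where f="r t _"])
    also have "\<dots> = (\<Sum>p\<in>offd S. \<Sum>I\<in>{I\<in>Pow S. fst p \<notin> I \<and> snd p \<notin> I}. r t x I * r t (t (fst p) + t (snd p)) ((S - {fst p, snd p}) - I))"
      using sum.swap_restrict[OF fP fO] by simp
    also have "\<dots> = (\<Sum>p\<in>offd S. r t (x + (t (fst p) + t (snd p))) (S - {fst p, snd p}))"
    proof (intro sum.cong refl)
      fix p assume "p \<in> offd S"
      have "{I\<in>Pow S. fst p \<notin> I \<and> snd p \<notin> I} = Pow (S - {fst p, snd p})" by auto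
      thus "(\<Sum>I\<in>{I\<in>Pow S. fst p \<notin> I \<and> snd p \<notin> I}. r t x I * r t (t (fst p) + t (snd p)) ((S - {fst p, snd p}) - I)) =
          r t (x + (t (fst p) + t (snd p))) (S - {fst p, snd p})"
        using S by (simp add: AB)
    qed
    finally show ?thesis .
  qed
  show ?thesis
    unfolding phi_def right_diff_distrib sum_subtractf 1[symmetric] 2[symmetric]
    by (simp add: sum_distrib_left mult.left_commute)
qed



lemma card_Suc_ne: "card A = Suc n \<Longrightarrow> A \<noteq> {}" by auto

lemma mainU:
  fixes t :: "'b \<Rightarrow> 'a::field_char_0"
  assumes M: "finite M" "card M \<ge> 2" and nz: "\<And>i. i \<in> M \<Longrightarrow> t i \<noteq> 0"
    and tM: "card M < 4 \<Longrightarrow> zs t M \<noteq> 0"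
  shows "(\<Sum>I\<in>Pow M - {{}, M}. f t I * f t (M - I)) = zs t M powi (int (card M) - 4) *
     (2 * zs t M * (\<Sum>i\<in>M. 1 / t i) - of_int ((int (card M) - 2) * (int (card M) - 3)))"
proof -
  have "M \<noteq> {}" using M by auto
  then obtain e where e: "e \<in> M" by auto
  define S where "S = M - {e}"
  define x where "x = t e"
  have fS: "finite S" using M by (simp add: S_def)
  have cS: "card S = card M - 1" using M e by (simp add: S_def)
  have x0: "x \<noteq> 0" using nz e by (simp add: x_def)
  have nzS: "\<And>b. b \<in> S \<Longrightarrow> t b \<noteq> 0" using nz by (auto simp: S_def)
  define L where "L = (\<Sum>b\<in>S. r t (x + t b) (S - {b}) / t b) -
    (1/2) * (\<Sum>p\<in>offd S. r t (x + (t (fst p) + t (snd p))) (S - {fst p, snd p}))"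
  have U: "(\<Sum>I\<in>Pow M - {{}, M}. f t I * f t (M - I)) = 2 * L / x"
  proof -
    have "x * (\<Sum>I\<in>{I\<in>Pow M. e \<in> I \<and> I \<noteq> M}. f t I * f t (M - I)) = L"
      unfolding x_def step_d2[of M e t, OF M(1) e nz[OF e]] S_def[symmetric]
      using step_d3[OF fS nzS, where x="t e"] step_d4[OF fS, where x="t e" and t=t] unfolding L_def x_def by simp
    hence "(\<Sum>I\<in>{I\<in>Pow M. e \<in> I \<and> I \<noteq> M}. f t I * f t (M - I)) = L / x"
      using x0 by (simp add: field_simps)
    thus ?thesis unfolding step_d1[of M e t, OF M(1) e] by simp
  qed
  have T: "zs t M = x + zs t S" unfolding S_def x_def by (rule zs_remove[OF M(1) e])
  have R: "(\<Sum>i\<in>M. 1 / t i) = 1 / x + (\<Sum>b\<in>S. 1 / t b)"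
    unfolding S_def x_def using M(1) e by (simp add: sum.remove)
  have "card S \<ge> 1" using cS M by simp
  hence "card S = 1 \<or> card S = 2 \<or> card S \<ge> 3" by auto
  moreover {
    assume c1: "card S = 1"
    then obtain b where b: "S = {b}" by (metis card_1_singletonE)
    have cM: "card M = 2" using cS c1 M by simp
    have "offd S = {}" using b by (auto simp: offd_def)
    hence L: "L = 1 / t b" unfolding L_def using b by (simp add: r_def)
    have T0: "x + t b \<noteq> 0" using tM cM T b by (simp add: zs_def)
    have p: "(x + zs t S) powi (int 2 - 4) = inverse ((x + t b) * (x + t b))"
      using b by (simp add: zs_def power_int_minus power2_eq_square)
    have A: "2 * (x + zs t S) * (1 / x + (\<Sum>b\<in>S. 1 / t b)) = 2 * ((x + t b) * (x + t b)) / (x * t b)"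
      using x0 nzS[of b] b by (simp add: zs_def field_simps)
    have B: "inverse ((x + t b) * (x + t b)) * (2 * ((x + t b) * (x + t b)) / (x * t b)) = 2 / (x * t b)"
    proof -
      have g: "\<And>q w. (q::'a) \<noteq> 0 \<Longrightarrow> inverse q * (2 * q / w) = 2 / w" by (simp add: divide_inverse)
      show ?thesis by (rule g) (use T0 in simp)
    qed
    have C: "of_int ((int 2 - 2) * (int 2 - 3)) = (0::'a)" by simp
    have ?thesis unfolding U T R L cM p unfolding A C diff_zero B using x0 nzS[of b] b by simp

  }
  moreover {
    assume c2: "card S = 2"
    then obtain b c where bc: "S = {b, c}" "b \<noteq> c" by (metis card_2_iff)
    have cM: "card M = 3" using cS c2 M by simp
    have o: "offd S = {(b,c), (c,b)}" using bc by (auto simp: offd_def)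
    have L: "L = (x + t b) / t b + (x + t c) / t c - 1" unfolding L_def using bc o
      by (simp add: r_def insert_Diff_if)
    have T0: "x + (t b + t c) \<noteq> 0" using tM cM T bc by (simp add: zs_def)
    define W where "W = 1 / x + 1 / t b + 1 / t c"
    have p: "(x + zs t S) powi (int 3 - 4) = inverse (x + (t b + t c))"
      using bc by (simp add: zs_def)
    have A: "2 * (x + zs t S) * (1 / x + (\<Sum>b\<in>S. 1 / t b)) = 2 * (x + (t b + t c)) * W"
      using bc by (simp add: zs_def W_def add.assoc)
    have B: "inverse (x + (t b + t c)) * (2 * (x + (t b + t c)) * W - 0) = 2 * W"
    proof -
      have g: "\<And>q w. (q::'a) \<noteq> 0 \<Longrightarrow> inverse q * (2 * q * w - 0) = 2 * w" by (simp add: field_simps)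
      show ?thesis by (rule g) (rule T0)
    qed
    have C: "of_int ((int 3 - 2) * (int 3 - 3)) = (0::'a)" by simp
    have D: "2 * ((x + t b) / t b + (x + t c) / t c - 1) / x = 2 * W"
      unfolding W_def using x0 nzS[of b] nzS[of c] bc by (simp add: field_simps)
    have ?thesis unfolding U T R L cM p unfolding A C B D ..
  }
  moreover {
    assume c3: "card S \<ge> 3"
    then obtain k where k: "card S = k + 3" by (metis add.commute le_Suc_ex)
    have cM: "card M = k + 4" using cS k M by simp
    define Z where "Z = zs t S"
    define R' where "R' = (\<Sum>b\<in>S. 1 / t b)"
    have r1: "r t (x + t b) (S - {b}) = (x + t b) * (x + Z)^(k+1)" if b: "b \<in> S" for b
    proof -
      have "card (S - {b}) = k + 2" using b fS k by simp
      hence "S - {b} \<noteq> {}" using card_Suc_ne[of "S - {b}" "k+1"] by simp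
      moreover have "x + t b + zs t (S - {b}) = x + Z" using zs_remove[OF fS b, of t] by (simp add: Z_def)
      ultimately show ?thesis using \<open>card (S - {b}) = k + 2\<close> by (simp add: r_def add.assoc)
    qed
    have r2: "r t (x + (t (fst p) + t (snd p))) (S - {fst p, snd p}) = (x + t (fst p) + t (snd p)) * (x + Z)^k"
      if p: "p \<in> offd S" for p
    proof -
      obtain a b where ab: "p = (a, b)" "a \<in> S" "b \<in> S" "a \<noteq> b" using p by (auto simp: offd_def)
      have cc: "card (S - {a, b}) = k + 1" using ab fS k by (simp add: card_Diff_subset)
      hence ne: "S - {a,b} \<noteq> {}" using card_Suc_ne[of "S - {a,b}" k] by simp
      have "zs t S = t a + t b + zs t (S - {a,b})"
        using zs_remove[OF fS ab(2), where t=t] zs_remove[of "S - {a}" b t] ab fS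
        by (simp add: Diff_insert2[symmetric] insert_commute add.assoc)
      thus ?thesis using ab ne cc by (simp add: r_def Z_def add.assoc)
    qed
    have s1: "(\<Sum>b\<in>S. r t (x + t b) (S - {b}) / t b) = (x + Z)^(k+1) * (x * R' + of_nat (k + 3))"
    proof -
      have "(\<Sum>b\<in>S. r t (x + t b) (S - {b}) / t b) = (\<Sum>b\<in>S. (x + Z)^(k+1) * (x * (1 / t b) + 1))"
        using nzS by (intro sum.cong refl) (simp add: r1 field_simps)
      also have "\<dots> = (x + Z)^(k+1) * (\<Sum>b\<in>S. x * (1 / t b) + 1)"
        by (simp only: sum_distrib_left)
      also have "(\<Sum>b\<in>S. x * (1 / t b) + 1) = x * R' + of_nat (card S)"
        unfolding sum.distrib sum_distrib_left[symmetric] R'_def by simp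
      finally show ?thesis using k by simp
    qed
    have s2: "(\<Sum>p\<in>offd S. r t (x + (t (fst p) + t (snd p))) (S - {fst p, snd p})) =
        (x + Z)^k * (of_nat ((k+3) * (k+2)) * x + 2 * of_nat (k+2) * Z)"
    proof -
      have "(\<Sum>p\<in>offd S. r t (x + (t (fst p) + t (snd p))) (S - {fst p, snd p})) =
          (\<Sum>p\<in>offd S. (x + t (fst p) + t (snd p)) * (x + Z)^k)"
        by (intro sum.cong refl) (simp add: r2)
      also have "\<dots> = (\<Sum>p\<in>offd S. x + t (fst p) + t (snd p)) * (x + Z)^k"
        by (simp only: sum_distrib_right)
      also have "\<dots> = (of_nat (card S * (card S - 1)) * x + 2 * of_nat (card S - 1) * Z) * (x + Z)^k"
        by (simp only: sum_offd[OF fS] Z_def)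
      finally show ?thesis using k by (simp add: mult.commute)
    qed
    have L: "L = (x + Z)^(k+1) * (x * R' + of_nat (k + 3)) -
        (1/2) * ((x + Z)^k * (of_nat ((k+3) * (k+2)) * x + 2 * of_nat (k+2) * Z))"
      unfolding L_def s1 s2 ..
    have pw: "zs t M powi (int (card M) - 4) = (x + Z)^k" using T cM by (simp add: Z_def)
    have ?thesis unfolding U pw unfolding R T cM L Z_def[symmetric] R'_def[symmetric] using x0
      by (simp add: field_simps)
  }
  ultimately show ?thesis by blast
qed



definition PP :: "nat multiset \<Rightarrow> (nat multiset \<times> nat multiset) set" where
  "PP ka = {(la, mu). la + mu = ka}"

lemma PP_add: "PP (add_mset x ka) =
   (\<lambda>p. (add_mset x (fst p), snd p)) ` PP ka \<union> (\<lambda>p. (fst p, add_mset x (snd p))) ` PP ka"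
proof (rule set_eqI, rule iffI)
  fix p assume "p \<in> PP (add_mset x ka)"
  then obtain la mu where p: "p = (la, mu)" "la + mu = add_mset x ka" by (auto simp: PP_def)
  show "p \<in> (\<lambda>p. (add_mset x (fst p), snd p)) ` PP ka \<union> (\<lambda>p. (fst p, add_mset x (snd p))) ` PP ka"
  proof (cases "x \<in># la")
    case True
    hence "la = add_mset x (la - {#x#})" by simp
    moreover have "(la - {#x#}) + mu = ka"
    proof -
      have "mu + la - {#x#} = ka" using p(2) by (simp add: union_commute)
      hence "mu + (la - {#x#}) = ka" using diff_union_single_conv[OF True, of mu] by simp
      thus ?thesis by (simp add: union_commute)
    qed
    ultimately show ?thesis using p by (force simp: PP_def)
  next
    case False
    have "x \<in># la + mu" using p by simp
    hence "x \<in># mu" using False by simp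
    hence "mu = add_mset x (mu - {#x#})" by simp
    moreover have "la + (mu - {#x#}) = ka"
    proof -
      have "la + mu - {#x#} = ka" using p(2) by simp
      thus ?thesis using diff_union_single_conv[OF \<open>x \<in># mu\<close>, of la] by simp
    qed
    ultimately show ?thesis using p by (force simp: PP_def)
  qed
next
  fix p assume "p \<in> (\<lambda>p. (add_mset x (fst p), snd p)) ` PP ka \<union> (\<lambda>p. (fst p, add_mset x (snd p))) ` PP ka"
  thus "p \<in> PP (add_mset x ka)" by (auto simp: PP_def)
qed

lemma finite_PP: "finite (PP ka)"
proof (induction ka)
  case empty
  have "PP {#} = {({#}, {#})}" by (auto simp: PP_def)
  thus ?case by simp
next
  case (add x ka)
  thus ?case by (simp add: PP_add)
qed

lemma aut_add: "aut (add_mset x M) = aut M * (count M x + 1)"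
proof (cases "x \<in># M")
  case True
  have "aut (add_mset x M) = (\<Prod>y\<in>set_mset M. fact (count (add_mset x M) y))"
    using True by (simp add: aut_def insert_absorb)
  also have "\<dots> = fact (count M x + 1) * (\<Prod>y\<in>set_mset M - {x}. fact (count M y))"
    using True by (subst prod.remove[of _ x]) auto
  also have "\<dots> = (count M x + 1) * (fact (count M x) * (\<Prod>y\<in>set_mset M - {x}. fact (count M y)))"
    by (simp add: algebra_simps)
  also have "fact (count M x) * (\<Prod>y\<in>set_mset M - {x}. fact (count M y)) = aut M"
    unfolding aut_def using True by (subst (2) prod.remove[of _ x]) auto
  finally show ?thesis by simp
next
  case False
  have "aut (add_mset x M) = fact (count (add_mset x M) x) * (\<Prod>y\<in>set_mset M. fact (count (add_mset x M) y))"
    using False by (simp add: aut_def)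
  also have "(\<Prod>y\<in>set_mset M. fact (count (add_mset x M) y)) = aut M"
    unfolding aut_def using False by (intro prod.cong) auto
  moreover have "count M x = 0" using False by (simp add: count_eq_zero_iff)
  ultimately show ?thesis by simp
qed

lemma aut_pos: "aut M > 0"
  unfolding aut_def by (simp add: prod_pos)

definition cc :: "nat multiset \<Rightarrow> nat multiset \<Rightarrow> nat multiset \<Rightarrow> real" where
  "cc ka la mu = real (aut ka) / (real (aut la) * real (aut mu))"

lemma pascal:
  assumes "la + mu = add_mset x ka"
  shows "cc (add_mset x ka) la mu =
    (if x \<in># la then cc ka (la - {#x#}) mu else 0) + (if x \<in># mu then cc ka la (mu - {#x#}) else 0)"
proof -
  define a where "a = count la x"
  define b where "b = count mu x"
  have ab: "a + b = count ka x + 1" using arg_cong[OF assms, of "\<lambda>M. count M x"] by (simp add: a_def b_def)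
  have p: "real (aut la) > 0" "real (aut mu) > 0" "real (aut ka) > 0" using aut_pos by auto
  have 1: "(if x \<in># la then cc ka (la - {#x#}) mu else 0) = real (aut ka) * a / (real (aut la) * real (aut mu))"
  proof (cases "x \<in># la")
    case True
    have "aut la = aut (la - {#x#}) * a"
      using aut_add[of x "la - {#x#}"] True by (simp add: a_def)
    moreover have "a > 0" using True by (simp add: a_def)
    ultimately show ?thesis using True p by (simp add: cc_def field_simps)
  next
    case False thus ?thesis by (simp add: a_def count_eq_zero_iff)
  qed
  have 2: "(if x \<in># mu then cc ka la (mu - {#x#}) else 0) = real (aut ka) * b / (real (aut la) * real (aut mu))"
  proof (cases "x \<in># mu")
    case True
    have "aut mu = aut (mu - {#x#}) * b"
      using aut_add[of x "mu - {#x#}"] True by (simp add: b_def)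
    moreover have "b > 0" using True by (simp add: b_def)
    ultimately show ?thesis using True p by (simp add: cc_def field_simps)
  next
    case False thus ?thesis by (simp add: b_def count_eq_zero_iff)
  qed
  have "cc (add_mset x ka) la mu = real (aut ka) * (a + b) / (real (aut la) * real (aut mu))"
    unfolding cc_def aut_add ab by (simp add: algebra_simps)
  thus ?thesis unfolding 1 2 by (simp add: add_divide_distrib distrib_left)
qed



lemma comb:
  "(\<Sum>I\<in>Pow {..<length xs}. F (image_mset (nth xs) (mset_set I)) (image_mset (nth xs) (mset_set ({..<length xs} - I))))
   = (\<Sum>p\<in>PP (mset xs). F (fst p) (snd p) * cc (mset xs) (fst p) (snd p))"
proof (induction xs arbitrary: F rule: rev_induct)
  case Nil
  have "PP {#} = {({#}, {#})}" by (auto simp: PP_def)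
  thus ?case by (simp add: cc_def aut_def)
next
  case (snoc x xs)
  define n where "n = length xs"
  define N where "N = {..<n}"
  define ka where "ka = mset xs"
  define A where "A = (\<lambda>I. image_mset (nth xs) (mset_set I))"
  define B where "B = (\<lambda>I. image_mset (nth xs) (mset_set (N - I)))"
  have len: "{..<length (xs @ [x])} = insert n N" by (auto simp: n_def N_def)
  have nN: "n \<notin> N" by (simp add: N_def)
  have fN: "finite N" by (simp add: N_def)
  have nth1: "\<And>J. J \<subseteq> N \<Longrightarrow> image_mset (nth (xs @ [x])) (mset_set J) = image_mset (nth xs) (mset_set J)"
  proof -
    fix J assume J: "J \<subseteq> N"
    have fJ: "finite J" using J fN finite_subset by auto
    show "image_mset (nth (xs @ [x])) (mset_set J) = image_mset (nth xs) (mset_set J)"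
      by (rule image_mset_cong) (use J fJ in \<open>auto simp: N_def n_def nth_append\<close>)
  qed
  have nthn: "(xs @ [x]) ! n = x" by (simp add: n_def)
  have "(\<Sum>I\<in>Pow {..<length (xs @ [x])}. F (image_mset (nth (xs @ [x])) (mset_set I))
           (image_mset (nth (xs @ [x])) (mset_set ({..<length (xs @ [x])} - I))))
      = (\<Sum>I\<in>Pow N. F (A I) (add_mset x (B I))) + (\<Sum>I\<in>Pow N. F (add_mset x (A I)) (B I))"
  proof -
    have e1: "image_mset (nth (xs @ [x])) (mset_set I) = A I" if "I \<in> Pow N" for I
      using nth1 that by (simp add: A_def)
    have e2: "image_mset (nth (xs @ [x])) (mset_set (insert n N - I)) = add_mset x (B I)" if I: "I \<in> Pow N" for I
    proof -
      have "insert n N - I = insert n (N - I)" using I nN by auto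
      hence "mset_set (insert n N - I) = add_mset n (mset_set (N - I))" using fN nN by simp
      thus ?thesis using nth1[of "N - I"] nthn by (simp add: B_def)
    qed
    have e3: "image_mset (nth (xs @ [x])) (mset_set (insert n I)) = add_mset x (A I)" if I: "I \<in> Pow N" for I
    proof -
      have "finite I" "n \<notin> I" using I fN nN finite_subset by auto
      hence "mset_set (insert n I) = add_mset n (mset_set I)" by simp
      thus ?thesis using nth1[of I] I nthn by (simp add: A_def)
    qed
    have e4: "image_mset (nth (xs @ [x])) (mset_set (insert n N - insert n I)) = B I" if I: "I \<in> Pow N" for I
    proof -
      have "insert n N - insert n I = N - I" using I nN by auto
      thus ?thesis using nth1[of "N - I"] by (simp add: B_def)
    qed
    have s1: "(\<Sum>I\<in>Pow N. F (image_mset (nth (xs @ [x])) (mset_set I)) (image_mset (nth (xs @ [x])) (mset_set (insert n N - I))))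
       = (\<Sum>I\<in>Pow N. F (A I) (add_mset x (B I)))"
      by (rule sum.cong[OF refl]) (simp only: e1 e2)
    have s2: "(\<Sum>I\<in>Pow N. F (image_mset (nth (xs @ [x])) (mset_set (insert n I))) (image_mset (nth (xs @ [x])) (mset_set (insert n N - insert n I))))
       = (\<Sum>I\<in>Pow N. F (add_mset x (A I)) (B I))"
      by (rule sum.cong[OF refl]) (simp only: e3 e4)
    show ?thesis unfolding len sum_Pow_insert[OF fN nN] s1 s2 ..
  qed
  also have "\<dots> = (\<Sum>I\<in>Pow N. (\<lambda>la mu. F la (add_mset x mu) + F (add_mset x la) mu) (A I) (B I))"
    by (simp add: sum.distrib)
  also have "\<dots> = (\<Sum>p\<in>PP ka. (F (fst p) (add_mset x (snd p)) + F (add_mset x (fst p)) (snd p)) * cc ka (fst p) (snd p))"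
    using snoc.IH[of "\<lambda>la mu. F la (add_mset x mu) + F (add_mset x la) mu"]
    unfolding A_def B_def N_def n_def ka_def by simp
  also have "\<dots> = (\<Sum>p\<in>PP (mset (xs @ [x])). F (fst p) (snd p) * cc (mset (xs @ [x])) (fst p) (snd p))"
  proof -
    have mx: "mset (xs @ [x]) = add_mset x ka" by (simp add: ka_def)
    let ?P = "PP (add_mset x ka)"
    have fP: "finite ?P" by (rule finite_PP)
    have "(\<Sum>p\<in>?P. F (fst p) (snd p) * cc (add_mset x ka) (fst p) (snd p))
      = (\<Sum>p\<in>?P. F (fst p) (snd p) * (if x \<in># fst p then cc ka (fst p - {#x#}) (snd p) else 0))
      + (\<Sum>p\<in>?P. F (fst p) (snd p) * (if x \<in># snd p then cc ka (fst p) (snd p - {#x#}) else 0))"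
      by (subst sum.distrib[symmetric], intro sum.cong refl)
         (auto simp: PP_def pascal distrib_left)
    also have "(\<Sum>p\<in>?P. F (fst p) (snd p) * (if x \<in># fst p then cc ka (fst p - {#x#}) (snd p) else 0))
        = (\<Sum>q\<in>PP ka. F (add_mset x (fst q)) (snd q) * cc ka (fst q) (snd q))"
    proof -
      have "(\<Sum>p\<in>?P. F (fst p) (snd p) * (if x \<in># fst p then cc ka (fst p - {#x#}) (snd p) else 0))
          = (\<Sum>p\<in>{p\<in>?P. x \<in># fst p}. F (fst p) (snd p) * cc ka (fst p - {#x#}) (snd p))"
        using fP by (simp add: sum.inter_filter if_distrib cong: if_cong)
      also have "{p\<in>?P. x \<in># fst p} = (\<lambda>q. (add_mset x (fst q), snd q)) ` PP ka"
      proof (rule set_eqI, rule iffI)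
        fix p assume "p \<in> {p\<in>?P. x \<in># fst p}"
        then obtain la mu where p: "p = (la, mu)" "la + mu = add_mset x ka" "x \<in># la" by (auto simp: PP_def)
        have "mu + la - {#x#} = ka" using p(2) by (simp add: union_commute)
        hence "mu + (la - {#x#}) = ka" using diff_union_single_conv[OF p(3), of mu] by simp
        hence "(la - {#x#}, mu) \<in> PP ka" by (simp add: PP_def union_commute)
        moreover have "p = (add_mset x (la - {#x#}), mu)" using p by simp
        ultimately show "p \<in> (\<lambda>q. (add_mset x (fst q), snd q)) ` PP ka" by force
      qed (auto simp: PP_def)
      also have "(\<Sum>p\<in>(\<lambda>q. (add_mset x (fst q), snd q)) ` PP ka. F (fst p) (snd p) * cc ka (fst p - {#x#}) (snd p))
          = (\<Sum>q\<in>PP ka. F (add_mset x (fst q)) (snd q) * cc ka (fst q) (snd q))"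
        by (subst sum.reindex) (auto simp: inj_on_def prod_eq_iff)
      finally show ?thesis .
    qed
    also have "(\<Sum>p\<in>?P. F (fst p) (snd p) * (if x \<in># snd p then cc ka (fst p) (snd p - {#x#}) else 0))
        = (\<Sum>q\<in>PP ka. F (fst q) (add_mset x (snd q)) * cc ka (fst q) (snd q))"
    proof -
      have "(\<Sum>p\<in>?P. F (fst p) (snd p) * (if x \<in># snd p then cc ka (fst p) (snd p - {#x#}) else 0))
          = (\<Sum>p\<in>{p\<in>?P. x \<in># snd p}. F (fst p) (snd p) * cc ka (fst p) (snd p - {#x#}))"
        using fP by (simp add: sum.inter_filter if_distrib cong: if_cong)
      also have "{p\<in>?P. x \<in># snd p} = (\<lambda>q. (fst q, add_mset x (snd q))) ` PP ka"
      proof (rule set_eqI, rule iffI)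
        fix p assume "p \<in> {p\<in>?P. x \<in># snd p}"
        then obtain la mu where p: "p = (la, mu)" "la + mu = add_mset x ka" "x \<in># mu" by (auto simp: PP_def)
        have "la + mu - {#x#} = ka" using p(2) by simp
        hence "la + (mu - {#x#}) = ka" using diff_union_single_conv[OF p(3), of la] by simp
        hence "(la, mu - {#x#}) \<in> PP ka" by (simp add: PP_def)
        moreover have "p = (la, add_mset x (mu - {#x#}))" using p by simp
        ultimately show "p \<in> (\<lambda>q. (fst q, add_mset x (snd q))) ` PP ka" by force
      qed (auto simp: PP_def)
      also have "(\<Sum>p\<in>(\<lambda>q. (fst q, add_mset x (snd q))) ` PP ka. F (fst p) (snd p) * cc ka (fst p) (snd p - {#x#}))
          = (\<Sum>q\<in>PP ka. F (fst q) (add_mset x (snd q)) * cc ka (fst q) (snd q))"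
        by (subst sum.reindex) (auto simp: inj_on_def prod_eq_iff)
      finally show ?thesis .
    qed
    finally show ?thesis unfolding mx by (simp add: sum.distrib distrib_right add.commute)
  qed
  finally show ?case .
qed



lemma part1:
  fixes m :: nat and t :: "nat \<Rightarrow> 'a :: field_char_0"
  assumes m2: "m \<ge> 2"
    and nz: "\<And>i. i \<in> {1..m} \<Longrightarrow> t i \<noteq> 0"
    and tM: "m < 4 \<Longrightarrow> (\<Sum>i\<in>{1..m}. t i) \<noteq> 0"
  shows
    "(\<Sum>(I, J)\<in>{(I, J). I \<union> J = {1..m} \<and> I \<inter> J = {} \<and> I \<noteq> {} \<and> J \<noteq> {}}.
        (\<Sum>i\<in>I. t i) powi (int (card I) - 2) * (\<Sum>j\<in>J. t j) powi (int (card J) - 2))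
     = (\<Sum>i\<in>{1..m}. t i) powi (int m - 4) *
        (2 * (\<Sum>i\<in>{1..m}. t i) * (\<Sum>i\<in>{1..m}. 1 / t i)
         - of_int ((int m - 2) * (int m - 3)))"
proof -
  define M where "M = {1..m}"
  have fM: "finite M" and cM: "card M = m" by (simp_all add: M_def)
  have eq: "{(I, J). I \<union> J = M \<and> I \<inter> J = {} \<and> I \<noteq> {} \<and> J \<noteq> {}} = (\<lambda>I. (I, M - I)) ` (Pow M - {{}, M})"
  proof (rule set_eqI, rule iffI)
    fix p assume "p \<in> {(I, J). I \<union> J = M \<and> I \<inter> J = {} \<and> I \<noteq> {} \<and> J \<noteq> {}}"
    then obtain I J where p: "p = (I, J)" "I \<union> J = M" "I \<inter> J = {}" "I \<noteq> {}" "J \<noteq> {}" by auto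
    hence "J = M - I" "I \<in> Pow M - {{}, M}" by auto
    thus "p \<in> (\<lambda>I. (I, M - I)) ` (Pow M - {{}, M})" using p by auto
  qed auto
  have inj: "inj_on (\<lambda>I. (I, M - I)) (Pow M - {{}, M})" by (auto simp: inj_on_def)
  have "(\<Sum>(I, J)\<in>{(I, J). I \<union> J = M \<and> I \<inter> J = {} \<and> I \<noteq> {} \<and> J \<noteq> {}}.
        (\<Sum>i\<in>I. t i) powi (int (card I) - 2) * (\<Sum>j\<in>J. t j) powi (int (card J) - 2))
      = (\<Sum>I\<in>Pow M - {{}, M}. f t I * f t (M - I))"
    unfolding eq by (simp add: sum.reindex[OF inj] f_def zs_def)
  also have "\<dots> = zs t M powi (int (card M) - 4) *
     (2 * zs t M * (\<Sum>i\<in>M. 1 / t i) - of_int ((int (card M) - 2) * (int (card M) - 3)))"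
    by (rule mainU) (use fM cM m2 nz tM in \<open>auto simp: M_def zs_def\<close>)
  finally show ?thesis unfolding cM by (simp add: M_def zs_def)
qed

lemma sum_nth_mset: "(\<Sum>i<length xs. g (xs ! i)) = (\<Sum>k\<in>#mset xs. g k)"
  by (induction xs rule: rev_induct) (simp_all add: nth_append add.commute)

lemma part2:
  assumes m2: "m \<ge> 2"
  shows "\<forall>ka :: nat multiset. is_partition ka \<and> size ka = m \<longrightarrow>
      (1/2) * (\<Sum>(la, mu)\<in>{(la, mu). la + mu = ka \<and> la \<noteq> {#} \<and> mu \<noteq> {#}}.
          (real (sum_mset la) powi (int (size la) - 2) / real (aut la)) *
          (real (sum_mset mu) powi (int (size mu) - 2) / real (aut mu)) * real (aut ka))
      = real (sum_mset ka) powi (int m - 4) *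
        (real (sum_mset ka) * (\<Sum>k\<in>#ka. 1 / real k) - (1/2) * real_of_int ((int m - 2) * (int m - 3)))"
proof (intro allI impI)
  fix ka :: "nat multiset" assume ka: "is_partition ka \<and> size ka = m"
  obtain xs where xs: "mset xs = ka" using ex_mset by blast
  have len: "length xs = m" using ka xs by auto
  define M where "M = {..<m}"
  define t where "t = (\<lambda>i. real (xs ! i))"
  define A where "A = (\<lambda>I. image_mset (nth xs) (mset_set I))"
  have fM: "finite M" and cM: "card M = m" by (simp_all add: M_def)
  have pos: "\<And>i. i \<in> M \<Longrightarrow> xs ! i > 0"
  proof -
    fix i assume "i \<in> M"
    hence "xs ! i \<in># ka" using xs len by (auto simp: M_def)
    thus "xs ! i > 0" using ka by (auto simp: is_partition_def)
  qed
  have nz: "\<And>i. i \<in> M \<Longrightarrow> t i \<noteq> 0" using pos by (auto simp: t_def)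
  have zsM: "zs t M = real (sum_mset ka)"
    using sum_nth_mset[of "\<lambda>k. real k" xs] xs len by (simp add: zs_def t_def M_def lessThan_def)
  have RM: "(\<Sum>i\<in>M. 1 / t i) = (\<Sum>k\<in>#ka. 1 / real k)"
    using sum_nth_mset[of "\<lambda>k. 1 / real k" xs] xs len by (simp add: t_def M_def)
  have "0 \<in> M" using m2 by (simp add: M_def)
  hence M0: "M \<noteq> {}" by blast
  have Tpos: "zs t M > 0" unfolding zs_def t_def
    using pos M0 fM by (intro sum_pos) auto
  have main: "(\<Sum>I\<in>Pow M - {{}, M}. f t I * f t (M - I)) = zs t M powi (int m - 4) *
     (2 * zs t M * (\<Sum>i\<in>M. 1 / t i) - of_int ((int m - 2) * (int m - 3)))"
    using mainU[OF fM _ nz] cM m2 Tpos by simp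
  define F where "F = (\<lambda>la mu. if la \<noteq> {#} \<and> mu \<noteq> {#} then
      real (sum_mset la) powi (int (size la) - 2) * real (sum_mset mu) powi (int (size mu) - 2) else (0::real))"
  have sA: "real (sum_mset (A I)) = zs t I" "size (A I) = card I" if "I \<subseteq> M" for I
    using that by (simp_all add: A_def zs_def t_def sum_unfold_sum_mset[symmetric])
  have eA: "A I = {#} \<longleftrightarrow> I = {}" if "I \<subseteq> M" for I
    using that fM finite_subset by (auto simp: A_def mset_set_empty_iff)
  have c: "(\<Sum>I\<in>Pow M. F (A I) (A (M - I))) = (\<Sum>p\<in>PP ka. F (fst p) (snd p) * cc ka (fst p) (snd p))"
    using comb[of F xs] xs len by (simp add: A_def M_def)
  have lhs: "(\<Sum>I\<in>Pow M. F (A I) (A (M - I))) = (\<Sum>I\<in>Pow M - {{}, M}. f t I * f t (M - I))"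
  proof -
    have "(\<Sum>I\<in>Pow M. F (A I) (A (M - I))) = (\<Sum>I\<in>Pow M - {{}, M}. F (A I) (A (M - I)))"
      by (rule sum.mono_neutral_right) (use fM eA in \<open>auto simp: F_def\<close>)
    also have "\<dots> = (\<Sum>I\<in>Pow M - {{}, M}. f t I * f t (M - I))"
    proof (rule sum.cong[OF refl])
      fix I assume I: "I \<in> Pow M - {{}, M}"
      hence "A I \<noteq> {#}" "A (M - I) \<noteq> {#}" using eA[of I] eA[of "M - I"] by auto
      thus "F (A I) (A (M - I)) = f t I * f t (M - I)"
        using I sA[of I] sA[of "M - I"] by (auto simp: F_def f_def)
    qed
    finally show ?thesis .
  qed
  have rhs: "(\<Sum>(la, mu)\<in>{(la, mu). la + mu = ka \<and> la \<noteq> {#} \<and> mu \<noteq> {#}}.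
          (real (sum_mset la) powi (int (size la) - 2) / real (aut la)) *
          (real (sum_mset mu) powi (int (size mu) - 2) / real (aut mu)) * real (aut ka))
     = (\<Sum>p\<in>PP ka. F (fst p) (snd p) * cc ka (fst p) (snd p))"
  proof -
    have "(\<Sum>(la, mu)\<in>{(la, mu). la + mu = ka \<and> la \<noteq> {#} \<and> mu \<noteq> {#}}.
          (real (sum_mset la) powi (int (size la) - 2) / real (aut la)) *
          (real (sum_mset mu) powi (int (size mu) - 2) / real (aut mu)) * real (aut ka))
       = (\<Sum>p\<in>{(la, mu). la + mu = ka \<and> la \<noteq> {#} \<and> mu \<noteq> {#}}. F (fst p) (snd p) * cc ka (fst p) (snd p))"
      by (rule sum.cong[OF refl]) (auto simp: F_def cc_def)
    also have "\<dots> = (\<Sum>p\<in>PP ka. F (fst p) (snd p) * cc ka (fst p) (snd p))"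
      by (rule sum.mono_neutral_left) (auto simp: PP_def F_def finite_PP[unfolded PP_def])
    finally show ?thesis .
  qed
  show "(1/2) * (\<Sum>(la, mu)\<in>{(la, mu). la + mu = ka \<and> la \<noteq> {#} \<and> mu \<noteq> {#}}.
          (real (sum_mset la) powi (int (size la) - 2) / real (aut la)) *
          (real (sum_mset mu) powi (int (size mu) - 2) / real (aut mu)) * real (aut ka))
      = real (sum_mset ka) powi (int m - 4) *
        (real (sum_mset ka) * (\<Sum>k\<in>#ka. 1 / real k) - (1/2) * real_of_int ((int m - 2) * (int m - 3)))"
    unfolding rhs c[symmetric] lhs main zsM RM by (simp add: algebra_simps)
qed

theorem mainTheorem6:
  fixes m :: nat and t :: "nat \<Rightarrow> 'a :: field_char_0"
  assumes m2: "m \<ge> 2"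
    and nz: "\<And>i. i \<in> {1..m} \<Longrightarrow> t i \<noteq> 0"
    and tM: "m < 4 \<Longrightarrow> (\<Sum>i\<in>{1..m}. t i) \<noteq> 0"
  shows
    "((\<Sum>(I, J)\<in>{(I, J). I \<union> J = {1..m} \<and> I \<inter> J = {} \<and> I \<noteq> {} \<and> J \<noteq> {}}.
        (\<Sum>i\<in>I. t i) powi (int (card I) - 2) * (\<Sum>j\<in>J. t j) powi (int (card J) - 2))
     = (\<Sum>i\<in>{1..m}. t i) powi (int m - 4) *
        (2 * (\<Sum>i\<in>{1..m}. t i) * (\<Sum>i\<in>{1..m}. 1 / t i)
         - of_int ((int m - 2) * (int m - 3)))) \<and>
    (\<forall>ka :: nat multiset. is_partition ka \<and> size ka = m \<longrightarrow>
      (1/2) * (\<Sum>(la, mu)\<in>{(la, mu). la + mu = ka \<and> la \<noteq> {#} \<and> mu \<noteq> {#}}.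
          (real (sum_mset la) powi (int (size la) - 2) / real (aut la)) *
          (real (sum_mset mu) powi (int (size mu) - 2) / real (aut mu)) * real (aut ka))
      = real (sum_mset ka) powi (int m - 4) *
        (real (sum_mset ka) * (\<Sum>k\<in>#ka. 1 / real k) - (1/2) * real_of_int ((int m - 2) * (int m - 3))))"
    using part1[OF m2 nz tM] part2[OF m2] by blast

end
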